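(* Every flat $\curlyvee$-algebra $S$ is simple (every homomorphism from $S$ into a $\curlyvee$-algebra is either injective or constant), hence subdirectly irreducible.
   Context: A flat $\curlyvee$-algebra is an algebra $(S,\curlyvee)$ with a binary operation and an element $0\in S$ such that $a\curlyvee b=0$ whenever $a,b$ are distinct and both different from $0$, and $a\curlyvee a=a$, $a\curlyvee 0=0\curlyvee a=a$ for all $a\in S$. A $\curlyvee$-algebra is an algebra $(S,\curlyvee)$ such that, defining $a\sqcup b=a\curlyvee(a\curlyvee b)$ and $a\lesssim b$ iff $b\sqcup a=b$: $\sqcup$ is associative, $a\sqcup a=a$, $a\sqcup b=(a\sqcup b)\sqcup a$; $\curlyvee$ is commutative and idempotent; $(a\curlyvee b)\sqcup(a\sqcup b)=a\sqcup b$; $a\sqcup(b\curlyvee c)=(a\sqcup b)\curlyvee(a\sqcup c)$; and if $d\lesssim a,b,c,a\curlyvee b,b\curlyvee c$ then $d\lesssim a\curlyvee c$. *)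

theory Defs
  imports Main
begin

definition flat_valg :: "('a \<Rightarrow> 'a \<Rightarrow> 'a) \<Rightarrow> 'a \<Rightarrow> bool" where
  "flat_valg v z \<longleftrightarrow>
     (\<forall>a b. a \<noteq> b \<and> a \<noteq> z \<and> b \<noteq> z \<longrightarrow> v a b = z) \<and>
     (\<forall>a. v a a = a \<and> v a z = a \<and> v z a = a)"

definition vjoin :: "('a \<Rightarrow> 'a \<Rightarrow> 'a) \<Rightarrow> 'a \<Rightarrow> 'a \<Rightarrow> 'a" where
  "vjoin v a b = v a (v a b)"

definition vle :: "('a \<Rightarrow> 'a \<Rightarrow> 'a) \<Rightarrow> 'a \<Rightarrow> 'a \<Rightarrow> bool" where
  "vle v a b \<longleftrightarrow> vjoin v b a = b"

definition valg :: "('a \<Rightarrow> 'a \<Rightarrow> 'a) \<Rightarrow> bool" where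
  "valg v \<longleftrightarrow>
     (\<forall>a b c. vjoin v (vjoin v a b) c = vjoin v a (vjoin v b c)) \<and>
     (\<forall>a. vjoin v a a = a) \<and>
     (\<forall>a b. vjoin v a b = vjoin v (vjoin v a b) a) \<and>
     (\<forall>a b. v a b = v b a) \<and>
     (\<forall>a. v a a = a) \<and>
     (\<forall>a b. vjoin v (v a b) (vjoin v a b) = vjoin v a b) \<and>
     (\<forall>a b c. vjoin v a (v b c) = v (vjoin v a b) (vjoin v a c)) \<and>
     (\<forall>a b c d. vle v d a \<and> vle v d b \<and> vle v d c \<and> vle v d (v a b) \<and> vle v d (v b c)
        \<longrightarrow> vle v d (v a c))"

end

theory Submission
  imports Defs
begin

theorem proposition4p2:
  fixes v :: "'a \<Rightarrow> 'a \<Rightarrow> 'a" and z :: 'a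
    and w :: "'b \<Rightarrow> 'b \<Rightarrow> 'b" and h :: "'a \<Rightarrow> 'b"
  assumes "flat_valg v z"
    and "valg w"
    and "\<forall>a b. h (v a b) = w (h a) (h b)"
  shows "inj h \<or> (\<forall>x y. h x = h y)"
proof (cases "inj h")
  case True
  then show ?thesis by simp
next
  case False
  have F1: "\<And>a b. a \<noteq> b \<Longrightarrow> a \<noteq> z \<Longrightarrow> b \<noteq> z \<Longrightarrow> v a b = z"
    and F2: "\<And>a. v a a = a" and F3: "\<And>a. v a z = a" and F4: "\<And>a. v z a = a"
    using assms(1) unfolding flat_valg_def by blast+
  have H: "\<And>a b. h (v a b) = w (h a) (h b)" using assms(3) by blast
  obtain a b where ab: "a \<noteq> b" "h a = h b" using False unfolding inj_def by blast
  have key: "\<exists>c. c \<noteq> z \<and> h c = h z"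
  proof (cases "a = z \<or> b = z")
    case True
    then show ?thesis using ab by metis
  next
    case nz: False
    have "h z = h (v a b)" using F1 ab nz by simp
    also have "\<dots> = w (h a) (h a)" using H ab by simp
    also have "\<dots> = h a" using H F2 by metis
    finally show ?thesis using nz by metis
  qed
  then obtain c where c: "c \<noteq> z" "h c = h z" by blast
  have all: "\<And>d. h d = h z"
  proof -
    fix d
    show "h d = h z"
    proof (cases "d = z \<or> d = c")
      case True
      then show ?thesis using c by auto
    next
      case False
      have "h z = h (v c d)" using F1 c False by metis
      also have "\<dots> = w (h z) (h d)" using H c by simp
      also have "\<dots> = h d" using H F4 by metis
      finally show ?thesis by simp
    qed
  qed
  then show ?thesis by metis
qed

end
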